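(* For $i,j\in J$ put $h_{ij}:=H(b_i\otimes b_j)=\min\{i,2-j\}$. The following nine vectors belong to $N$: $C_{b_0,b_0}=v_0\otimes v_0$, $C_{b_0,b_1}=v_0\otimes v_1+q^2v_1\otimes v_0$, $C_{b_0,b_2}=v_0\otimes v_2+q\,v_1\otimes v_1+q^4v_2\otimes v_0$, $C_{b_1,b_2}=v_1\otimes v_2+q^2v_2\otimes v_1$, $C_{b_2,b_2}=v_2\otimes v_2$, $C_{zb_2,b_1}=zv_2\otimes v_1+q^2v_1\otimes zv_2$, $C_{z^2b_2,b_0}=z^2v_2\otimes v_0+q\,zv_1\otimes zv_1+q^4v_0\otimes z^2v_2$, $C_{zb_1,b_0}=zv_1\otimes v_0+q^2v_0\otimes zv_1$, $C_{zb_1,b_1}=zv_1\otimes v_1+q^2v_1\otimes zv_1+q^2[2](v_0\otimes zv_2+zv_2\otimes v_0)$. These are exactly the elements $C_{z^{h_{ij}}b_i,b_j}$, one for each pair $(i,j)\in J\times J$. Moreover, for each $(i,j)$, letting $\mathcal B_{i,j}=\{(b,b')\in B_{\mathrm{aff}}\times B_{\mathrm{aff}}: H(b\otimes b')>0,\ l(b_j)\le l(b)<l(z^{h_{ij}}b_i),\ l(b_j)<l(b')\le l(z^{h_{ij}}b_i)\}$, the element $C_{z^{h_{ij}}b_i,b_j}$ has the form $G(z^{h_{ij}}b_i)\otimes G(b_j)-\sum_{(b,b')\in\mathcal B_{i,j}}a_{b,b'}\,G(b)\otimes G(b')$ with all coefficients $a_{b,b'}\in q\mathbb Z[q]$, and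 $H(z^{h_{ij}}b_i\otimes b_j)=0$.
   Context: Let $\mathfrak g=\widehat{\mathfrak{sl}}_2$, $I=\{0,1\}$, weight lattice $P=\mathbb Z\Lambda_0\oplus\mathbb Z\Lambda_1\oplus\mathbb Z\delta$, coroots $h_0,h_1$ with $\langle h_i,\Lambda_j\rangle=\delta_{ij}$, $\langle h_i,\delta\rangle=0$, central element $c=h_0+h_1$. $U_q(\mathfrak g)$ is the quantum affine algebra over $\mathbb Q(q)$ with generators $e_i,f_i$ ($i\in I$), $q^h$ ($h\in P^*$), $t_i=q^{h_i}$, and coproduct $\Delta(q^h)=q^h\otimes q^h$, $\Delta(e_i)=e_i\otimes1+t_i^{-1}\otimes e_i$, $\Delta(f_i)=f_i\otimes t_i+1\otimes f_i$. $[n]=(q^n-q^{-n})/(q-q^{-1})$. Let $J=\{0,1,2\}$. $V_{\mathrm{aff}}$ is the $\mathbb Q(q)$-space with basis $z^av_j$ ($a\in\mathbb Z$, $j\in J$), a $U_q(\mathfrak g)$-module via: $\mathrm{wt}(z^av_j)=2(1-j)(\Lambda_1-\Lambda_0)+a\delta$, $q^hz^av_j=q^{\langle h,\mathrm{wt}(z^av_j)\rangle}z^av_j$, $e_1z^av_j=[3-j]z^av_{j-1}$, $f_1z^av_j=[j+1]z^av_{j+1}$, $e_0z^av_j=[j+1]z^{a+1}v_{j+1}$, $f_0z^av_j=[3-j]z^{a-1}v_{j-1}$ (with $v_{-1}=v_3=0$). The operator $z^b$ sends $z^av_j\mapsto z^{a+b}v_j$. The crystal of $V_{\mathrm{aff}}$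 is $B_{\mathrm{aff}}=\{z^ab_j: a\in\mathbb Z, j\in J\}$ with lower global base $G(z^ab_j)=z^av_j$. Define $l(z^ab_j)=2a-j$ and the energy function $H(z^ab_i\otimes z^{a'}b_j)=\min\{i,2-j\}-a+a'$. $N\subset V_{\mathrm{aff}}\otimes V_{\mathrm{aff}}$ is the smallest subspace containing $v_0\otimes v_0$ that is stable under the action of $U_q(\mathfrak g)$ (via $\Delta$) and under the operators $z\otimes z$, $z^{-1}\otimes z^{-1}$, $z\otimes1+1\otimes z$. *)

theory Defs
  imports "HOL-Computational_Algebra.Polynomial" "HOL-Computational_Algebra.Fraction_Field"
    "HOL-Library.Function_Algebras"
begin

type_synonym K = "rat poly fract"

definition qq :: K where "qq = Fract [:0, 1:] 1"

definition qint :: "int \<Rightarrow> K" where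
  "qint n = (qq powi n - qq powi (-n)) / (qq - qq powi (-1))"

text \<open>The index set J and the crystal B_aff: (a,j) stands for z^a b_j
  (and, as a basis vector of V_aff, for G(z^a b_j) = z^a v_j).\<close>
type_synonym bvec = "int \<times> nat"

definition J :: "nat set" where "J = {0, 1, 2}"

definition Baff :: "bvec set" where "Baff = {(a, j). j \<in> J}"

text \<open>Vectors of V_aff and of V_aff \<otimes> V_aff as coefficient functions on the
  bases z^a v_j and z^a v_j \<otimes> z^a' v_j'.\<close>
type_synonym vvec = "bvec \<Rightarrow> K"
type_synonym tens = "bvec \<times> bvec \<Rightarrow> K"

definition bas :: "'b \<Rightarrow> 'b \<Rightarrow> K" where
  "bas x = (\<lambda>y. if y = x then 1 else 0)"

definition scal :: "K \<Rightarrow> ('b \<Rightarrow> K) \<Rightarrow> ('b \<Rightarrow> K)" where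
  "scal c u = (\<lambda>y. c * u y)"

definition tp :: "vvec \<Rightarrow> vvec \<Rightarrow> tens" where
  "tp u w = (\<lambda>(x, y). u x * w y)"

definition lin :: "('b \<Rightarrow> 'c \<Rightarrow> K) \<Rightarrow> ('b \<Rightarrow> K) \<Rightarrow> ('c \<Rightarrow> K)" where
  "lin F T = (\<lambda>p. \<Sum>s\<in>{s. T s \<noteq> 0}. T s * F s p)"

text \<open>Weights: wt(z^a v_j) = 2(1-j)(Lambda_1 - Lambda_0) + a delta.
  An element h of P^* is given by integer coordinates (c0,c1,cd) w.r.t.
  the basis h_0, h_1, d dual to Lambda_0, Lambda_1, delta.\<close>
definition pair :: "int \<times> int \<times> int \<Rightarrow> bvec \<Rightarrow> int" where
  "pair h x = (case h of (c0, c1, cd) \<Rightarrow> case x of (a, j) \<Rightarrow>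
      c0 * (-(2 * (1 - int j))) + c1 * (2 * (1 - int j)) + cd * a)"

definition hcor :: "nat \<Rightarrow> int \<times> int \<times> int" where
  "hcor i = (if i = 0 then (1, 0, 0) else (0, 1, 0))"

text \<open>Action of the Chevalley generators on basis vectors of V_aff
  (v_{-1} = v_3 = 0).\<close>
definition eop :: "nat \<Rightarrow> bvec \<Rightarrow> vvec" where
  "eop i x = (case x of (a, j) \<Rightarrow>
     if i = 1 then (if 1 \<le> j \<and> j \<le> 2 then scal (qint (3 - int j)) (bas (a, j - 1)) else 0)
     else (if j \<le> 1 then scal (qint (int j + 1)) (bas (a + 1, j + 1)) else 0))"

definition fop :: "nat \<Rightarrow> bvec \<Rightarrow> vvec" where
  "fop i x = (case x of (a, j) \<Rightarrow>
     if i = 1 then (if j \<le> 1 then scal (qint (int j + 1)) (bas (a, j + 1)) else 0)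
     else (if 1 \<le> j \<and> j \<le> 2 then scal (qint (3 - int j)) (bas (a - 1, j - 1)) else 0))"

definition DeltaE :: "nat \<Rightarrow> bvec \<times> bvec \<Rightarrow> tens" where
  "DeltaE i p = (case p of (x, y) \<Rightarrow>
     tp (eop i x) (bas y) + scal (qq powi (- pair (hcor i) x)) (tp (bas x) (eop i y)))"

definition DeltaF :: "nat \<Rightarrow> bvec \<times> bvec \<Rightarrow> tens" where
  "DeltaF i p = (case p of (x, y) \<Rightarrow>
     scal (qq powi (pair (hcor i) y)) (tp (fop i x) (bas y)) + tp (bas x) (fop i y))"

definition DeltaQ :: "int \<times> int \<times> int \<Rightarrow> bvec \<times> bvec \<Rightarrow> tens" where
  "DeltaQ h p = (case p of (x, y) \<Rightarrow> scal (qq powi (pair h x + pair h y)) (bas (x, y)))"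

definition zshift :: "int \<Rightarrow> bvec \<Rightarrow> bvec" where
  "zshift b x = (case x of (a, j) \<Rightarrow> (a + b, j))"

definition Zboth :: "int \<Rightarrow> bvec \<times> bvec \<Rightarrow> tens" where
  "Zboth b p = (case p of (x, y) \<Rightarrow> bas (zshift b x, zshift b y))"

definition Zsum :: "bvec \<times> bvec \<Rightarrow> tens" where
  "Zsum p = (case p of (x, y) \<Rightarrow> bas (zshift 1 x, y) + bas (x, zshift 1 y))"

text \<open>N: smallest subspace containing v_0 \<otimes> v_0, stable under U_q(g)
  (equivalently under its generators e_i, f_i, q^h) and under
  z\<otimes>z, z^{-1}\<otimes>z^{-1}, z\<otimes>1 + 1\<otimes>z.\<close>
inductive_set N :: "tens set" where
  gen: "bas ((0, 0), (0, 0)) \<in> N"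
| zero: "0 \<in> N"
| add: "T \<in> N \<Longrightarrow> U \<in> N \<Longrightarrow> T + U \<in> N"
| smul: "T \<in> N \<Longrightarrow> scal c T \<in> N"
| e: "T \<in> N \<Longrightarrow> i \<in> {0, 1} \<Longrightarrow> lin (DeltaE i) T \<in> N"
| f: "T \<in> N \<Longrightarrow> i \<in> {0, 1} \<Longrightarrow> lin (DeltaF i) T \<in> N"
| qh: "T \<in> N \<Longrightarrow> lin (DeltaQ h) T \<in> N"
| zz: "T \<in> N \<Longrightarrow> lin (Zboth 1) T \<in> N"
| zzinv: "T \<in> N \<Longrightarrow> lin (Zboth (-1)) T \<in> N"
| zsum: "T \<in> N \<Longrightarrow> lin Zsum T \<in> N"

definition H :: "bvec \<times> bvec \<Rightarrow> int" where
  "H p = (case p of ((a, i), (a', j)) \<Rightarrow> min (int i) (2 - int j) - a + a')"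

definition l :: "bvec \<Rightarrow> int" where
  "l x = (case x of (a, j) \<Rightarrow> 2 * a - int j)"

definition hh :: "nat \<Rightarrow> nat \<Rightarrow> int" where
  "hh i j = H ((0, i), (0, j))"

definition Bset :: "nat \<Rightarrow> nat \<Rightarrow> (bvec \<times> bvec) set" where
  "Bset i j = {(b, b'). b \<in> Baff \<and> b' \<in> Baff \<and> H (b, b') > 0 \<and>
      l (0, j) \<le> l b \<and> l b < l (hh i j, i) \<and>
      l (0, j) < l b' \<and> l b' \<le> l (hh i j, i)}"

definition qZq :: "K set" where
  "qZq = {Fract p 1 | p. (\<forall>n. coeff p n \<in> \<int>) \<and> coeff p 0 = 0}"

text \<open>G(z^a b_j) \<otimes> G(z^a' b_j') = z^a v_j \<otimes> z^a' v_j'.\<close>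
definition tb :: "int \<Rightarrow> nat \<Rightarrow> int \<Rightarrow> nat \<Rightarrow> tens" where
  "tb a j a' j' = bas ((a, j), (a', j'))"

text \<open>The nine vectors of the statement; Cvec i j is the vector labelled
  C_{z^{h_ij} b_i, b_j} in the paper.\<close>
definition Cvec :: "nat \<Rightarrow> nat \<Rightarrow> tens" where
  "Cvec i j =
    (if (i, j) = (0, 0) then tb 0 0 0 0
     else if (i, j) = (0, 1) then tb 0 0 0 1 + scal (qq ^ 2) (tb 0 1 0 0)
     else if (i, j) = (0, 2) then tb 0 0 0 2 + scal qq (tb 0 1 0 1) + scal (qq ^ 4) (tb 0 2 0 0)
     else if (i, j) = (1, 2) then tb 0 1 0 2 + scal (qq ^ 2) (tb 0 2 0 1)
     else if (i, j) = (2, 2) then tb 0 2 0 2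
     else if (i, j) = (2, 1) then tb 1 2 0 1 + scal (qq ^ 2) (tb 0 1 1 2)
     else if (i, j) = (2, 0) then tb 2 2 0 0 + scal qq (tb 1 1 1 1) + scal (qq ^ 4) (tb 0 0 2 2)
     else if (i, j) = (1, 0) then tb 1 1 0 0 + scal (qq ^ 2) (tb 0 0 1 1)
     else if (i, j) = (1, 1) then tb 1 1 0 1 + scal (qq ^ 2) (tb 0 1 1 1)
                                  + scal (qq ^ 2 * qint 2) (tb 0 0 1 2 + tb 1 2 0 0)
     else 0)"

end

theory Submission
  imports Defs
begin


lemma fract_poly_nz: "(p::rat poly) \<noteq> 0 \<Longrightarrow> Fract p 1 \<noteq> 0"
  by (simp add: Zero_fract_def eq_fract)

lemma qq_pow: "qq ^ n = Fract ([:0,1:] ^ n) 1"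
  by (induction n) (simp_all add: qq_def One_fract_def)

lemma Fract_add1: "Fract (a::rat poly) 1 + Fract b 1 = Fract (a + b) 1" by simp
lemma Fract_one: "1 = Fract (1::rat poly) 1" by (simp add: One_fract_def)

lemma qq_nz: "qq \<noteq> 0"
  unfolding qq_def by (rule fract_poly_nz) simp

lemma nz2: "qq^2 + 1 \<noteq> 0"
proof -
  have "qq^2 + 1 = Fract ([:0,1:]^2 + 1) 1" by (simp add: qq_pow One_fract_def)
  moreover have "([:0,1:]^2 + 1 :: rat poly) \<noteq> 0"
  proof
    assume "([:0,1:]^2 + 1 :: rat poly) = 0"
    then have "poly ([:0,1:]^2 + 1 :: rat poly) 0 = 0" by simp
    then show False by simp
  qed
  ultimately show ?thesis using fract_poly_nz by simp
qed

lemma nz3: "qq^2 - 1 \<noteq> 0"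
proof -
  have "qq^2 - 1 = Fract ([:0,1:]^2 - 1) 1" by (simp add: qq_pow One_fract_def)
  moreover have "([:0,1:]^2 - 1 :: rat poly) \<noteq> 0"
  proof
    assume "([:0,1:]^2 - 1 :: rat poly) = 0"
    then have "poly ([:0,1:]^2 - 1 :: rat poly) 0 = 0" by simp
    then show False by simp
  qed
  ultimately show ?thesis using fract_poly_nz by simp
qed

lemma nz4: "qq^4 + qq^2 + 1 \<noteq> 0"
proof -
  have "qq^4 + qq^2 + 1 = Fract ([:0,1:]^4 + [:0,1:]^2 + 1) 1" by (simp add: qq_pow One_fract_def)
  moreover have "([:0,1:]^4 + [:0,1:]^2 + 1 :: rat poly) \<noteq> 0"
  proof
    assume "([:0,1:]^4 + [:0,1:]^2 + 1 :: rat poly) = 0"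
    then have "poly ([:0,1:]^4 + [:0,1:]^2 + 1 :: rat poly) 0 = 0" by simp
    then show False by simp
  qed
  ultimately show ?thesis using fract_poly_nz by simp
qed

lemma nz5: "qq^4 + 1 \<noteq> 0"
proof -
  have "qq^4 + 1 = Fract ([:0,1:]^4 + 1) 1" by (simp add: qq_pow One_fract_def)
  moreover have "([:0,1:]^4 + 1 :: rat poly) \<noteq> 0"
  proof
    assume "([:0,1:]^4 + 1 :: rat poly) = 0"
    then have "poly ([:0,1:]^4 + 1 :: rat poly) 0 = 0" by simp
    then show False by simp
  qed
  ultimately show ?thesis using fract_poly_nz by simp
qed

lemma dnz: "qq - inverse qq \<noteq> 0"
proof
  assume "qq - inverse qq = 0"
  then have "qq * (qq - inverse qq) = 0" by simp
  then have "qq^2 - 1 = 0" using qq_nz by (simp add: algebra_simps power2_eq_square)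
  then show False using nz3 by simp
qed

lemma qint_eq: "Y = X * (qq - inverse qq) \<Longrightarrow> Y / (qq - inverse qq) = X"
  using dnz by simp

lemma qint1: "qint 1 = 1"
  using dnz unfolding qint_def by (simp add: power_int_minus)

lemma qint2: "qint 2 = (qq^2 + 1) / qq"
  unfolding qint_def power_int_minus power_int_numeral power_int_1_right
  by (rule qint_eq) (use qq_nz in \<open>simp add: field_simps power2_eq_square\<close>)

lemma qint3: "qint 3 = (qq^4 + qq^2 + 1) / qq^2"
  unfolding qint_def power_int_minus power_int_numeral power_int_1_right
  apply (rule qint_eq)
  using qq_nz apply (simp add: field_simps power2_eq_square)
  by algebra

lemma nz6: "qq^6 + qq^4 + qq^2 + 1 \<noteq> 0"
proof -
  have "qq^6 + qq^4 + qq^2 + 1 = Fract ([:0,1:]^6 + [:0,1:]^4 + [:0,1:]^2 + 1) 1" by (simp add: qq_pow One_fract_def)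
  moreover have "([:0,1:]^6 + [:0,1:]^4 + [:0,1:]^2 + 1 :: rat poly) \<noteq> 0"
  proof
    assume "([:0,1:]^6 + [:0,1:]^4 + [:0,1:]^2 + 1 :: rat poly) = 0"
    then have "poly ([:0,1:]^6 + [:0,1:]^4 + [:0,1:]^2 + 1 :: rat poly) 0 = 0" by simp
    then show False by simp
  qed
  ultimately show ?thesis using fract_poly_nz by simp
qed

lemma qint4: "qint 4 = (qq^6 + qq^4 + qq^2 + 1) / qq^3"
  unfolding qint_def power_int_minus power_int_numeral power_int_1_right
  apply (rule qint_eq)
  using qq_nz apply (simp add: field_simps power2_eq_square)
  by algebra

lemma qint2_nz: "qint 2 \<noteq> 0" using qint2 nz2 qq_nz by simp
lemma qint3_nz: "qint 3 \<noteq> 0" using qint3 nz4 qq_nz by simp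
lemma qint4_nz: "qint 4 \<noteq> 0" using qint4 nz6 qq_nz by simp



definition fs :: "('b \<Rightarrow> K) \<Rightarrow> bool" where "fs T = finite {s. T s \<noteq> 0}"

lemma lin_sup: "finite S \<Longrightarrow> {s. T s \<noteq> 0} \<subseteq> S \<Longrightarrow> lin F T p = (\<Sum>s\<in>S. T s * F s p)"
  unfolding lin_def by (rule sum.mono_neutral_left) auto

lemma fs_bas[simp]: "fs (bas x)" unfolding fs_def bas_def by simp
lemma fs_zero[simp]: "fs 0" unfolding fs_def by simp
lemma fs_add[simp]: "fs T \<Longrightarrow> fs U \<Longrightarrow> fs (T + U)"
  unfolding fs_def by (rule finite_subset[of _ "{s. T s \<noteq> 0} \<union> {s. U s \<noteq> 0}"]) auto
lemma fs_scal[simp]: "fs T \<Longrightarrow> fs (scal c T)"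
  unfolding fs_def scal_def by (rule finite_subset[of _ "{s. T s \<noteq> 0}"]) auto

lemma lin_bas[simp]: "lin F (bas x) = F x"
proof
  fix p
  have "{s. bas x s \<noteq> 0} = {x}" by (auto simp: bas_def)
  then show "lin F (bas x) p = F x p" unfolding lin_def by (simp add: bas_def)
qed

lemma lin_add[simp]: "fs T \<Longrightarrow> fs U \<Longrightarrow> lin F (T + U) = lin F T + lin F U"
proof
  fix p assume "fs T" "fs U"
  let ?S = "{s. T s \<noteq> 0} \<union> {s. U s \<noteq> 0}"
  have f: "finite ?S" using \<open>fs T\<close> \<open>fs U\<close> unfolding fs_def by simp
  have "lin F (T + U) p = (\<Sum>s\<in>?S. (T + U) s * F s p)" by (rule lin_sup[OF f, of "T + U"]) auto
  also have "\<dots> = (\<Sum>s\<in>?S. T s * F s p) + (\<Sum>s\<in>?S. U s * F s p)"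
    by (simp add: distrib_right sum.distrib)
  also have "(\<Sum>s\<in>?S. T s * F s p) = lin F T p" by (rule lin_sup[OF f, symmetric]) auto
  also have "(\<Sum>s\<in>?S. U s * F s p) = lin F U p" by (rule lin_sup[OF f, symmetric]) auto
  finally show "lin F (T + U) p = (lin F T + lin F U) p" by (simp add: plus_fun_def)
qed

lemma lin_scal[simp]: "fs T \<Longrightarrow> lin F (scal c T) = scal c (lin F T)"
proof
  fix p assume "fs T"
  let ?S = "{s. T s \<noteq> 0}"
  have f: "finite ?S" using \<open>fs T\<close> unfolding fs_def by simp
  have "lin F (scal c T) p = (\<Sum>s\<in>?S. scal c T s * F s p)" by (rule lin_sup[OF f]) (auto simp: scal_def)
  also have "\<dots> = c * (\<Sum>s\<in>?S. T s * F s p)" by (simp add: scal_def sum_distrib_left mult.assoc)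
  also have "(\<Sum>s\<in>?S. T s * F s p) = lin F T p" by (rule lin_sup[OF f, symmetric]) auto
  finally show "lin F (scal c T) p = scal c (lin F T) p" by (simp add: scal_def)
qed

lemma tp_scal1[simp]: "tp (scal c u) w = scal c (tp u w)" unfolding tp_def scal_def by (auto simp: mult.assoc)
lemma tp_scal2[simp]: "tp u (scal c w) = scal c (tp u w)" unfolding tp_def scal_def by (auto simp: mult.left_commute)
lemma tp_bas[simp]: "tp (bas x) (bas y) = bas (x, y)" unfolding tp_def bas_def by auto
lemma tp_zero1[simp]: "tp 0 w = 0" unfolding tp_def by auto
lemma tp_zero2[simp]: "tp u 0 = 0" unfolding tp_def by auto
lemma scal_zero[simp]: "scal c 0 = 0" unfolding scal_def by auto
lemma scal_add[simp]: "scal c (T + U) = scal c T + scal c U" unfolding scal_def by (auto simp: distrib_left)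
lemma scal_scal[simp]: "scal c (scal d T) = scal (c * d) T" unfolding scal_def by (auto simp: mult.assoc)
lemma scal_one[simp]: "scal 1 T = T" unfolding scal_def by auto
lemma scal_app: "scal c T x = c * T x" unfolding scal_def by simp
lemma bas_app: "bas x y = (if y = x then 1 else 0)" unfolding bas_def by simp

lemmas ops = DeltaE_def DeltaF_def eop_def fop_def pair_def hcor_def Zsum_def zshift_def

lemma C00: "Cvec 0 0 \<in> N" unfolding Cvec_def tb_def by (simp add: N.gen)

lemma C01: "Cvec 0 1 \<in> N"
proof -
  have "lin (DeltaF 1) (Cvec 0 0) \<in> N" by (rule N.f[OF C00]) simp
  also have "lin (DeltaF 1) (Cvec 0 0) = Cvec 0 1"
    by (rule ext) (simp add: Cvec_def tb_def ops qint1 bas_app scal_app)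
  finally show ?thesis .
qed

lemmas kfacts = qint1 qq_nz bas_app scal_app numeral_2_eq_2 power_int_minus
lemmas kfacts2 = qint2 qint3 qint4 field_simps

lemma C02: "Cvec 0 2 \<in> N"
proof -
  have "scal (inverse (qint 2)) (lin (DeltaF 1) (Cvec 0 1)) \<in> N" by (rule N.smul, rule N.f[OF C01]) simp
  also have "scal (inverse (qint 2)) (lin (DeltaF 1) (Cvec 0 1)) = Cvec 0 2"
    apply (rule ext) apply (simp add: Cvec_def tb_def ops kfacts)
    using qint2_nz qint3_nz qint4_nz apply (simp add: field_simps)
    using qq_nz by (simp add: kfacts2, simp add: eval_nat_numeral algebra_simps)
  finally show ?thesis .
qed

lemma C12: "Cvec 1 2 \<in> N"
proof -
  have "scal (inverse (qint 3)) (lin (DeltaF 1) (Cvec 0 2)) \<in> N" by (rule N.smul, rule N.f[OF C02]) simp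
  also have "scal (inverse (qint 3)) (lin (DeltaF 1) (Cvec 0 2)) = Cvec 1 2"
    apply (rule ext) apply (simp add: Cvec_def tb_def ops kfacts)
    using qint2_nz qint3_nz qint4_nz apply (simp add: field_simps)
    using qq_nz by (simp add: kfacts2, simp add: eval_nat_numeral algebra_simps)
  finally show ?thesis .
qed

lemma C22: "Cvec 2 2 \<in> N"
proof -
  have "scal (inverse (qint 4)) (lin (DeltaF 1) (Cvec 1 2)) \<in> N" by (rule N.smul, rule N.f[OF C12]) simp
  also have "scal (inverse (qint 4)) (lin (DeltaF 1) (Cvec 1 2)) = Cvec 2 2"
    apply (rule ext) apply (simp add: Cvec_def tb_def ops kfacts)
    using qint2_nz qint3_nz qint4_nz apply (simp add: field_simps)
    using qq_nz by (simp add: kfacts2, simp add: eval_nat_numeral algebra_simps)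
  finally show ?thesis .
qed

lemma C10: "Cvec 1 0 \<in> N"
proof -
  have "lin (DeltaE 0) (Cvec 0 0) \<in> N" by (rule N.e[OF C00]) simp
  also have "lin (DeltaE 0) (Cvec 0 0) = Cvec 1 0"
    by (rule ext) (simp add: Cvec_def tb_def ops kfacts)
  finally show ?thesis .
qed

lemma C20: "Cvec 2 0 \<in> N"
proof -
  have "scal (inverse (qint 2)) (lin (DeltaE 0) (Cvec 1 0)) \<in> N" by (rule N.smul, rule N.e[OF C10]) simp
  also have "scal (inverse (qint 2)) (lin (DeltaE 0) (Cvec 1 0)) = Cvec 2 0"
    apply (rule ext) apply (simp add: Cvec_def tb_def ops kfacts)
    using qint2_nz qint3_nz qint4_nz apply (simp add: field_simps)
    using qq_nz by (simp add: kfacts2, simp add: eval_nat_numeral algebra_simps)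
  finally show ?thesis .
qed

lemma C11: "Cvec 1 1 \<in> N"
proof -
  have "lin (DeltaE 0) (Cvec 0 1) \<in> N" by (rule N.e[OF C01]) simp
  also have "lin (DeltaE 0) (Cvec 0 1) = Cvec 1 1"
    by (rule ext) (simp add: Cvec_def tb_def ops kfacts)
  finally show ?thesis .
qed

lemma C21: "Cvec 2 1 \<in> N"
proof -
  have "scal (inverse (qint 2)) (lin (DeltaF 1) (Cvec 1 1) + scal (- qint 2) (lin Zsum (Cvec 1 2))) \<in> N"
    by (intro N.smul N.add N.f[OF C11] N.zsum[OF C12]) simp
  also have "scal (inverse (qint 2)) (lin (DeltaF 1) (Cvec 1 1) + scal (- qint 2) (lin Zsum (Cvec 1 2))) = Cvec 2 1"
    apply (rule ext) apply (simp add: Cvec_def tb_def ops kfacts)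
    using qint2_nz qint3_nz qint4_nz apply (simp add: field_simps)
    using qq_nz by (simp add: kfacts2)
  finally show ?thesis .
qed



lemma qZq_zero[simp]: "0 \<in> qZq"
  unfolding qZq_def by (rule CollectI, rule exI[of _ 0]) (simp add: Zero_fract_def)

lemma qZq_add: "x \<in> qZq \<Longrightarrow> y \<in> qZq \<Longrightarrow> x + y \<in> qZq"
proof -
  assume "x \<in> qZq" "y \<in> qZq"
  then obtain p r where "x = Fract p 1" "\<forall>n. coeff p n \<in> \<int>" "coeff p 0 = 0"
      "y = Fract r 1" "\<forall>n. coeff r n \<in> \<int>" "coeff r 0 = 0" unfolding qZq_def by blast
  then show ?thesis unfolding qZq_def by (auto intro!: exI[of _ "p + r"])
qed

lemma qZq_negpow: "n \<ge> 1 \<Longrightarrow> - (qq ^ n) \<in> qZq"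
proof -
  assume n: "n \<ge> 1"
  have e: "[:0, 1:] ^ n = (monom 1 n :: rat poly)" by (simp add: monom_altdef)
  have "- (qq ^ n) = Fract (- monom 1 n) 1" by (simp add: qq_pow e)
  moreover have "\<forall>k. coeff (- monom (1::rat) n) k \<in> \<int>" by simp
  moreover have "coeff (- monom (1::rat) n) 0 = 0" using n by simp
  ultimately show ?thesis unfolding qZq_def by blast
qed

lemma qZq_m1: "- qq \<in> qZq" using qZq_negpow[of 1] by simp
lemma qZq_m2: "- (qq^2) \<in> qZq" using qZq_negpow[of 2] by simp
lemma qZq_m4: "- (qq^4) \<in> qZq" using qZq_negpow[of 4] by simp
lemma qZq_m32: "- (qq^2 * qint 2) \<in> qZq"
proof -
  have "- (qq^2 * qint 2) = - (qq^3) + - qq" using qq_nz by (simp add: qint2 field_simps power2_eq_square power3_eq_cube)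
  then show ?thesis using qZq_add[OF qZq_negpow[of 3] qZq_m1] by simp
qed

lemma sum_bas_app: "finite S \<Longrightarrow> (\<Sum>p\<in>S. scal (a p) (bas p)) x = (if x \<in> S then a x else (0::K))"
  by (induction S rule: finite_induct) (auto simp: scal_app bas_app)

lemma Bset_fin: "i \<in> J \<Longrightarrow> j \<in> J \<Longrightarrow> finite (Bset i j)"
proof -
  assume ij: "i \<in> J" "j \<in> J"
  let ?B = "{-1..3::int} \<times> {0..2::nat}"
  have "Bset i j \<subseteq> ?B \<times> ?B"
  proof
    fix p assume p: "p \<in> Bset i j"
    obtain a k a' k' where pe: "p = ((a, k), (a', k'))" by (metis prod.exhaust)
    have hh: "hh i j \<le> 2" using ij unfolding hh_def H_def J_def by auto
    from p ij hh show "p \<in> ?B \<times> ?B" unfolding pe Bset_def Baff_def J_def l_def by auto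
  qed
  then show ?thesis by (rule finite_subset) simp
qed

lemma part2:
  assumes ij: "i \<in> J" "j \<in> J"
    and lead: "Cvec i j ((hh i j, i), (0, j)) = 1"
    and notin: "((hh i j, i), (0, j)) \<notin> Bset i j"
    and supp: "\<And>x. x \<noteq> ((hh i j, i), (0, j)) \<Longrightarrow> x \<notin> Bset i j \<Longrightarrow> Cvec i j x = 0"
    and vals: "\<And>x. x \<noteq> ((hh i j, i), (0, j)) \<Longrightarrow> - Cvec i j x \<in> qZq"
  shows "\<exists>a :: bvec \<times> bvec \<Rightarrow> K. (\<forall>p\<in>Bset i j. a p \<in> qZq) \<and>
        Cvec i j = bas ((hh i j, i), (0, j)) - (\<Sum>p\<in>Bset i j. scal (a p) (bas p))"
proof (intro exI conjI ballI)
  fix p assume "p \<in> Bset i j"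
  then show "- Cvec i j p \<in> qZq" using vals notin by metis
next
  show "Cvec i j = bas ((hh i j, i), (0, j)) - (\<Sum>p\<in>Bset i j. scal (- Cvec i j p) (bas p))"
  proof
    fix x
    show "Cvec i j x = (bas ((hh i j, i), (0, j)) - (\<Sum>p\<in>Bset i j. scal (- Cvec i j p) (bas p))) x"
      using supp[of x] lead notin by (auto simp: sum_bas_app[OF Bset_fin[OF ij]] bas_app)
  qed
qed



lemmas cv = Cvec_def tb_def bas_app scal_app hh_def H_def
lemmas bs = Bset_def Baff_def J_def H_def l_def hh_def
lemmas qzs = qZq_m1 qZq_m2 qZq_m4 qZq_m32

lemma P00: "Cvec 0 0 \<in> N \<and>
     (\<exists>a :: bvec \<times> bvec \<Rightarrow> K. (\<forall>p\<in>Bset 0 0. a p \<in> qZq) \<and>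
        Cvec 0 0 = bas ((hh 0 0, 0), (0, 0)) - (\<Sum>p\<in>Bset 0 0. scal (a p) (bas p))) \<and>
     H ((hh 0 0, 0), (0, 0)) = 0"
proof (intro conjI)
  show "Cvec 0 0 \<in> N" by (rule C00)
  show "H ((hh 0 0, 0), (0, 0)) = 0" by (simp add: hh_def H_def)
  show "\<exists>a :: bvec \<times> bvec \<Rightarrow> K. (\<forall>p\<in>Bset 0 0. a p \<in> qZq) \<and>
        Cvec 0 0 = bas ((hh 0 0, 0), (0, 0)) - (\<Sum>p\<in>Bset 0 0. scal (a p) (bas p))"
  proof (rule part2)
    show "0 \<in> J" "0 \<in> J" by (simp_all add: J_def)
    show "Cvec 0 0 ((hh 0 0, 0), (0, 0)) = 1" by (simp add: cv)
    show "((hh 0 0, 0), (0, 0)) \<notin> Bset 0 0" by (simp add: bs)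
    fix x
    show "x \<noteq> ((hh 0 0, 0), (0, 0)) \<Longrightarrow> x \<notin> Bset 0 0 \<Longrightarrow> Cvec 0 0 x = 0"
      by (rule ccontr) (auto simp: cv bs split: if_splits)
    show "x \<noteq> ((hh 0 0, 0), (0, 0)) \<Longrightarrow> - Cvec 0 0 x \<in> qZq"
      by (auto simp: cv qzs)
  qed
qed

lemma P01: "Cvec 0 1 \<in> N \<and>
     (\<exists>a :: bvec \<times> bvec \<Rightarrow> K. (\<forall>p\<in>Bset 0 1. a p \<in> qZq) \<and>
        Cvec 0 1 = bas ((hh 0 1, 0), (0, 1)) - (\<Sum>p\<in>Bset 0 1. scal (a p) (bas p))) \<and>
     H ((hh 0 1, 0), (0, 1)) = 0"
proof (intro conjI)
  show "Cvec 0 1 \<in> N" by (rule C01)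
  show "H ((hh 0 1, 0), (0, 1)) = 0" by (simp add: hh_def H_def)
  show "\<exists>a :: bvec \<times> bvec \<Rightarrow> K. (\<forall>p\<in>Bset 0 1. a p \<in> qZq) \<and>
        Cvec 0 1 = bas ((hh 0 1, 0), (0, 1)) - (\<Sum>p\<in>Bset 0 1. scal (a p) (bas p))"
  proof (rule part2)
    show "0 \<in> J" "1 \<in> J" by (simp_all add: J_def)
    show "Cvec 0 1 ((hh 0 1, 0), (0, 1)) = 1" by (simp add: cv)
    show "((hh 0 1, 0), (0, 1)) \<notin> Bset 0 1" by (simp add: bs)
    fix x
    show "x \<noteq> ((hh 0 1, 0), (0, 1)) \<Longrightarrow> x \<notin> Bset 0 1 \<Longrightarrow> Cvec 0 1 x = 0"
      by (rule ccontr) (auto simp: cv bs split: if_splits)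
    show "x \<noteq> ((hh 0 1, 0), (0, 1)) \<Longrightarrow> - Cvec 0 1 x \<in> qZq"
      by (auto simp: cv qzs)
  qed
qed

lemma P02: "Cvec 0 2 \<in> N \<and>
     (\<exists>a :: bvec \<times> bvec \<Rightarrow> K. (\<forall>p\<in>Bset 0 2. a p \<in> qZq) \<and>
        Cvec 0 2 = bas ((hh 0 2, 0), (0, 2)) - (\<Sum>p\<in>Bset 0 2. scal (a p) (bas p))) \<and>
     H ((hh 0 2, 0), (0, 2)) = 0"
proof (intro conjI)
  show "Cvec 0 2 \<in> N" by (rule C02)
  show "H ((hh 0 2, 0), (0, 2)) = 0" by (simp add: hh_def H_def)
  show "\<exists>a :: bvec \<times> bvec \<Rightarrow> K. (\<forall>p\<in>Bset 0 2. a p \<in> qZq) \<and>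
        Cvec 0 2 = bas ((hh 0 2, 0), (0, 2)) - (\<Sum>p\<in>Bset 0 2. scal (a p) (bas p))"
  proof (rule part2)
    show "0 \<in> J" "2 \<in> J" by (simp_all add: J_def)
    show "Cvec 0 2 ((hh 0 2, 0), (0, 2)) = 1" by (simp add: cv)
    show "((hh 0 2, 0), (0, 2)) \<notin> Bset 0 2" by (simp add: bs)
    fix x
    show "x \<noteq> ((hh 0 2, 0), (0, 2)) \<Longrightarrow> x \<notin> Bset 0 2 \<Longrightarrow> Cvec 0 2 x = 0"
      by (rule ccontr) (auto simp: cv bs split: if_splits)
    show "x \<noteq> ((hh 0 2, 0), (0, 2)) \<Longrightarrow> - Cvec 0 2 x \<in> qZq"
      by (auto simp: cv qzs)
  qed
qed

lemma P10: "Cvec 1 0 \<in> N \<and>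
     (\<exists>a :: bvec \<times> bvec \<Rightarrow> K. (\<forall>p\<in>Bset 1 0. a p \<in> qZq) \<and>
        Cvec 1 0 = bas ((hh 1 0, 1), (0, 0)) - (\<Sum>p\<in>Bset 1 0. scal (a p) (bas p))) \<and>
     H ((hh 1 0, 1), (0, 0)) = 0"
proof (intro conjI)
  show "Cvec 1 0 \<in> N" by (rule C10)
  show "H ((hh 1 0, 1), (0, 0)) = 0" by (simp add: hh_def H_def)
  show "\<exists>a :: bvec \<times> bvec \<Rightarrow> K. (\<forall>p\<in>Bset 1 0. a p \<in> qZq) \<and>
        Cvec 1 0 = bas ((hh 1 0, 1), (0, 0)) - (\<Sum>p\<in>Bset 1 0. scal (a p) (bas p))"
  proof (rule part2)
    show "1 \<in> J" "0 \<in> J" by (simp_all add: J_def)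
    show "Cvec 1 0 ((hh 1 0, 1), (0, 0)) = 1" by (simp add: cv)
    show "((hh 1 0, 1), (0, 0)) \<notin> Bset 1 0" by (simp add: bs)
    fix x
    show "x \<noteq> ((hh 1 0, 1), (0, 0)) \<Longrightarrow> x \<notin> Bset 1 0 \<Longrightarrow> Cvec 1 0 x = 0"
      by (rule ccontr) (auto simp: cv bs split: if_splits)
    show "x \<noteq> ((hh 1 0, 1), (0, 0)) \<Longrightarrow> - Cvec 1 0 x \<in> qZq"
      by (auto simp: cv qzs)
  qed
qed

lemma P11: "Cvec 1 1 \<in> N \<and>
     (\<exists>a :: bvec \<times> bvec \<Rightarrow> K. (\<forall>p\<in>Bset 1 1. a p \<in> qZq) \<and>
        Cvec 1 1 = bas ((hh 1 1, 1), (0, 1)) - (\<Sum>p\<in>Bset 1 1. scal (a p) (bas p))) \<and>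
     H ((hh 1 1, 1), (0, 1)) = 0"
proof (intro conjI)
  show "Cvec 1 1 \<in> N" by (rule C11)
  show "H ((hh 1 1, 1), (0, 1)) = 0" by (simp add: hh_def H_def)
  show "\<exists>a :: bvec \<times> bvec \<Rightarrow> K. (\<forall>p\<in>Bset 1 1. a p \<in> qZq) \<and>
        Cvec 1 1 = bas ((hh 1 1, 1), (0, 1)) - (\<Sum>p\<in>Bset 1 1. scal (a p) (bas p))"
  proof (rule part2)
    show "1 \<in> J" "1 \<in> J" by (simp_all add: J_def)
    show "Cvec 1 1 ((hh 1 1, 1), (0, 1)) = 1" by (simp add: cv)
    show "((hh 1 1, 1), (0, 1)) \<notin> Bset 1 1" by (simp add: bs)
    fix x
    show "x \<noteq> ((hh 1 1, 1), (0, 1)) \<Longrightarrow> x \<notin> Bset 1 1 \<Longrightarrow> Cvec 1 1 x = 0"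
      by (rule ccontr) (auto simp: cv bs split: if_splits)
    show "x \<noteq> ((hh 1 1, 1), (0, 1)) \<Longrightarrow> - Cvec 1 1 x \<in> qZq"
      by (auto simp: cv qzs)
  qed
qed

lemma P12: "Cvec 1 2 \<in> N \<and>
     (\<exists>a :: bvec \<times> bvec \<Rightarrow> K. (\<forall>p\<in>Bset 1 2. a p \<in> qZq) \<and>
        Cvec 1 2 = bas ((hh 1 2, 1), (0, 2)) - (\<Sum>p\<in>Bset 1 2. scal (a p) (bas p))) \<and>
     H ((hh 1 2, 1), (0, 2)) = 0"
proof (intro conjI)
  show "Cvec 1 2 \<in> N" by (rule C12)
  show "H ((hh 1 2, 1), (0, 2)) = 0" by (simp add: hh_def H_def)
  show "\<exists>a :: bvec \<times> bvec \<Rightarrow> K. (\<forall>p\<in>Bset 1 2. a p \<in> qZq) \<and>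
        Cvec 1 2 = bas ((hh 1 2, 1), (0, 2)) - (\<Sum>p\<in>Bset 1 2. scal (a p) (bas p))"
  proof (rule part2)
    show "1 \<in> J" "2 \<in> J" by (simp_all add: J_def)
    show "Cvec 1 2 ((hh 1 2, 1), (0, 2)) = 1" by (simp add: cv)
    show "((hh 1 2, 1), (0, 2)) \<notin> Bset 1 2" by (simp add: bs)
    fix x
    show "x \<noteq> ((hh 1 2, 1), (0, 2)) \<Longrightarrow> x \<notin> Bset 1 2 \<Longrightarrow> Cvec 1 2 x = 0"
      by (rule ccontr) (auto simp: cv bs split: if_splits)
    show "x \<noteq> ((hh 1 2, 1), (0, 2)) \<Longrightarrow> - Cvec 1 2 x \<in> qZq"
      by (auto simp: cv qzs)
  qed
qed

lemma P20: "Cvec 2 0 \<in> N \<and>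
     (\<exists>a :: bvec \<times> bvec \<Rightarrow> K. (\<forall>p\<in>Bset 2 0. a p \<in> qZq) \<and>
        Cvec 2 0 = bas ((hh 2 0, 2), (0, 0)) - (\<Sum>p\<in>Bset 2 0. scal (a p) (bas p))) \<and>
     H ((hh 2 0, 2), (0, 0)) = 0"
proof (intro conjI)
  show "Cvec 2 0 \<in> N" by (rule C20)
  show "H ((hh 2 0, 2), (0, 0)) = 0" by (simp add: hh_def H_def)
  show "\<exists>a :: bvec \<times> bvec \<Rightarrow> K. (\<forall>p\<in>Bset 2 0. a p \<in> qZq) \<and>
        Cvec 2 0 = bas ((hh 2 0, 2), (0, 0)) - (\<Sum>p\<in>Bset 2 0. scal (a p) (bas p))"
  proof (rule part2)
    show "2 \<in> J" "0 \<in> J" by (simp_all add: J_def)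
    show "Cvec 2 0 ((hh 2 0, 2), (0, 0)) = 1" by (simp add: cv)
    show "((hh 2 0, 2), (0, 0)) \<notin> Bset 2 0" by (simp add: bs)
    fix x
    show "x \<noteq> ((hh 2 0, 2), (0, 0)) \<Longrightarrow> x \<notin> Bset 2 0 \<Longrightarrow> Cvec 2 0 x = 0"
      by (rule ccontr) (auto simp: cv bs split: if_splits)
    show "x \<noteq> ((hh 2 0, 2), (0, 0)) \<Longrightarrow> - Cvec 2 0 x \<in> qZq"
      by (auto simp: cv qzs)
  qed
qed

lemma P21: "Cvec 2 1 \<in> N \<and>
     (\<exists>a :: bvec \<times> bvec \<Rightarrow> K. (\<forall>p\<in>Bset 2 1. a p \<in> qZq) \<and>
        Cvec 2 1 = bas ((hh 2 1, 2), (0, 1)) - (\<Sum>p\<in>Bset 2 1. scal (a p) (bas p))) \<and>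
     H ((hh 2 1, 2), (0, 1)) = 0"
proof (intro conjI)
  show "Cvec 2 1 \<in> N" by (rule C21)
  show "H ((hh 2 1, 2), (0, 1)) = 0" by (simp add: hh_def H_def)
  show "\<exists>a :: bvec \<times> bvec \<Rightarrow> K. (\<forall>p\<in>Bset 2 1. a p \<in> qZq) \<and>
        Cvec 2 1 = bas ((hh 2 1, 2), (0, 1)) - (\<Sum>p\<in>Bset 2 1. scal (a p) (bas p))"
  proof (rule part2)
    show "2 \<in> J" "1 \<in> J" by (simp_all add: J_def)
    show "Cvec 2 1 ((hh 2 1, 2), (0, 1)) = 1" by (simp add: cv)
    show "((hh 2 1, 2), (0, 1)) \<notin> Bset 2 1" by (simp add: bs)
    fix x
    show "x \<noteq> ((hh 2 1, 2), (0, 1)) \<Longrightarrow> x \<notin> Bset 2 1 \<Longrightarrow> Cvec 2 1 x = 0"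
      by (rule ccontr) (auto simp: cv bs split: if_splits)
    show "x \<noteq> ((hh 2 1, 2), (0, 1)) \<Longrightarrow> - Cvec 2 1 x \<in> qZq"
      by (auto simp: cv qzs)
  qed
qed

lemma P22: "Cvec 2 2 \<in> N \<and>
     (\<exists>a :: bvec \<times> bvec \<Rightarrow> K. (\<forall>p\<in>Bset 2 2. a p \<in> qZq) \<and>
        Cvec 2 2 = bas ((hh 2 2, 2), (0, 2)) - (\<Sum>p\<in>Bset 2 2. scal (a p) (bas p))) \<and>
     H ((hh 2 2, 2), (0, 2)) = 0"
proof (intro conjI)
  show "Cvec 2 2 \<in> N" by (rule C22)
  show "H ((hh 2 2, 2), (0, 2)) = 0" by (simp add: hh_def H_def)
  show "\<exists>a :: bvec \<times> bvec \<Rightarrow> K. (\<forall>p\<in>Bset 2 2. a p \<in> qZq) \<and>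
        Cvec 2 2 = bas ((hh 2 2, 2), (0, 2)) - (\<Sum>p\<in>Bset 2 2. scal (a p) (bas p))"
  proof (rule part2)
    show "2 \<in> J" "2 \<in> J" by (simp_all add: J_def)
    show "Cvec 2 2 ((hh 2 2, 2), (0, 2)) = 1" by (simp add: cv)
    show "((hh 2 2, 2), (0, 2)) \<notin> Bset 2 2" by (simp add: bs)
    fix x
    show "x \<noteq> ((hh 2 2, 2), (0, 2)) \<Longrightarrow> x \<notin> Bset 2 2 \<Longrightarrow> Cvec 2 2 x = 0"
      by (rule ccontr) (auto simp: cv bs split: if_splits)
    show "x \<noteq> ((hh 2 2, 2), (0, 2)) \<Longrightarrow> - Cvec 2 2 x \<in> qZq"
      by (auto simp: cv qzs)
  qed
qed


theorem mainTheorem1: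
  shows "\<forall>i\<in>J. \<forall>j\<in>J.
     Cvec i j \<in> N \<and>
     (\<exists>a :: bvec \<times> bvec \<Rightarrow> K. (\<forall>p\<in>Bset i j. a p \<in> qZq) \<and>
        Cvec i j = bas ((hh i j, i), (0, j)) - (\<Sum>p\<in>Bset i j. scal (a p) (bas p))) \<and>
     H ((hh i j, i), (0, j)) = 0"
  unfolding J_def using P00 P01 P02 P10 P11 P12 P20 P21 P22 by auto

end
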